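(* Let $\{e^1,e^2,e^3,e^4\}$ be a basis of $\mathbb{R}^4$, let $a,b,c\in\mathbb{R}$ with $a\ne0$, set $\Delta=b^2-4ac$, and let $\Lambda=\langle e^{12}+e^{34},\ e^{13}+e^{42},\ ae^{14}+be^{42}+ce^{23}\rangle\subseteq\Lambda^2\mathbb{R}^4$. Then there exists a linear transformation $\theta$ of $\mathbb{R}^4$ (acting on $\Lambda^2\mathbb{R}^4$ in the induced way) such that: if $\Delta<0$, $\Lambda=\theta(\langle e^{12}+e^{34},\,e^{13}+e^{42},\,e^{14}+e^{23}\rangle)$; if $\Delta=0$, $\Lambda=\theta(\langle e^{12}+e^{34},\,e^{13},\,e^{14}+e^{23}\rangle)$; if $\Delta>0$, $\Lambda=\theta(\langle e^{12}+e^{34},\,e^{13},\,e^{24}\rangle)$.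
   Context: $e^{ij}$ abbreviates $e^i\wedge e^j$. *)

theory Defs
  imports "HOL-Analysis.Analysis"
begin

text \<open>Bivectors in \<open>\<Lambda>\<^sup>2 \<real>\<^sup>4\<close> are represented as skew-symmetric 4x4 real matrices:
  \<open>v \<wedge> w\<close> corresponds to \<open>v w\<^sup>T - w v\<^sup>T\<close>.\<close>

definition wedge :: "real^4 \<Rightarrow> real^4 \<Rightarrow> real^4^4" where
  "wedge v w = (\<chi> i j. v$i * w$j - w$i * v$j)"

definition eij :: "(nat \<Rightarrow> real^4) \<Rightarrow> nat \<Rightarrow> nat \<Rightarrow> real^4^4" where
  "eij e i j = wedge (e i) (e j)"

text \<open>Induced action of a linear map (matrix) \<open>\<theta>\<close> on \<open>\<Lambda>\<^sup>2\<close>: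
  \<open>\<theta>(v \<wedge> w) = \<theta> v \<wedge> \<theta> w\<close>, i.e. \<open>M \<mapsto> \<theta> M \<theta>\<^sup>T\<close>.\<close>
definition act2 :: "real^4^4 \<Rightarrow> real^4^4 \<Rightarrow> real^4^4" where
  "act2 \<theta> M = \<theta> ** M ** transpose \<theta>"

end

theory Submission
  imports Defs
begin

lemma act2_wedge: "act2 A (wedge v w) = wedge (A *v v) (A *v w)"
  unfolding act2_def wedge_def
  by (simp add: vec_eq_iff matrix_matrix_mult_def matrix_vector_mult_def transpose_def sum_4 algebra_simps)

lemma act2_add[simp]: "act2 A (x + y) = act2 A x + act2 A y"
  unfolding act2_def
  by (simp add: vec_eq_iff matrix_matrix_mult_def sum_4 algebra_simps)

lemma act2_scale[simp]: "act2 A (r *\<^sub>R x) = r *\<^sub>R act2 A x"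
  unfolding act2_def
  by (simp add: vec_eq_iff matrix_matrix_mult_def sum_4 algebra_simps)

lemma linear_act2: "linear (act2 A)"
  by (rule linearI) simp_all

lemma act2_comp: "act2 A (act2 B M) = act2 (A ** B) M"
  unfolding act2_def by (simp add: matrix_mul_assoc matrix_transpose_mul)

lemma act2_id: "act2 (mat 1) M = M"
  unfolding act2_def by (simp add: transpose_mat)

lemma reduce:
  fixes E P :: "real^4^4"
  assumes E: "invertible E" and P: "invertible P"
    and S: "span SL = span (act2 P ` SR)" and that: "E' ** E = mat 1"
  shows "span (act2 E ` SL) = act2 (E ** P ** E') ` span (act2 E ` SR)"
proof -
  have "act2 (E ** P ** E') ` span (act2 E ` SR) = act2 (E ** P ** E') ` act2 E ` span SR"
    by (simp add: span_linear_image[OF linear_act2])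
  also have "\<dots> = act2 E ` act2 P ` span SR"
    by (simp add: image_image act2_comp matrix_mul_assoc[symmetric] that)
  also have "\<dots> = act2 E ` span SL"
    using S by (simp add: span_linear_image[OF linear_act2])
  also have "\<dots> = span (act2 E ` SL)"
    by (simp add: span_linear_image[OF linear_act2])
  finally show ?thesis ..
qed

definition nk :: "4 \<Rightarrow> nat" where
  "nk k = (if k = 1 then 1 else if k = 2 then 2 else if k = 3 then 3 else 4)"

lemma nk_simps[simp]: "nk 1 = 1" "nk 2 = 2" "nk 3 = 3" "nk 4 = 4"
  by (simp_all add: nk_def)

lemma nk_range: "range nk = {1..4}"
proof -
  have "range nk = nk ` {1,2,3,4}" by (simp add: UNIV_4)
  also have "\<dots> = {1..4}" by auto
  finally show ?thesis .
qed

lemma basis_E: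
  fixes e :: "nat \<Rightarrow> real^4"
  assumes "inj_on e {1..4}" and "independent (e ` {1..4})"
  shows "\<exists>E::real^4^4. invertible E \<and> (\<forall>k. E *v axis k 1 = e (nk k))"
proof -
  define E :: "real^4^4" where "E = (\<chi> i k. e (nk k) $ i)"
  have col: "E *v axis k 1 = e (nk k)" for k
    by (simp add: matrix_vector_mult_basis column_def E_def)
  have "columns E = e ` {1..4}"
    unfolding columns_def using col nk_range
    by (auto simp: matrix_vector_mult_basis[symmetric]) (metis rangeE atLeastAtMost_iff)
  moreover have "span (e ` {1..4}) = UNIV"
  proof -
    have "card (e ` {1..4}) = 4" using assms(1) by (simp add: card_image)
    then have "UNIV \<subseteq> span (e ` {1..4})"
      using card_ge_dim_independent[OF subset_UNIV assms(2)] by simp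
    then show ?thesis by auto
  qed
  ultimately have "\<exists>B. E ** B = mat 1"
    using matrix_right_invertible_span_columns[of E] by (simp add: span_vec_eq)
  then have "invertible E" using invertible_right_inverse by blast
  then show ?thesis using col by blast
qed


definition v4 :: "real \<Rightarrow> real \<Rightarrow> real \<Rightarrow> real \<Rightarrow> real^4" where
  "v4 x1 x2 x3 x4 = (\<chi> i. if i = 1 then x1 else if i = 2 then x2 else if i = 3 then x3 else x4)"

lemma v4_nth[simp]: "v4 x1 x2 x3 x4 $ 1 = x1" "v4 x1 x2 x3 x4 $ 2 = x2"
  "v4 x1 x2 x3 x4 $ 3 = x3" "v4 x1 x2 x3 x4 $ 4 = x4"
  by (simp_all add: v4_def)

definition cols4 :: "real^4 \<Rightarrow> real^4 \<Rightarrow> real^4 \<Rightarrow> real^4 \<Rightarrow> real^4^4" where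
  "cols4 u1 u2 u3 u4 = (\<chi> i j. (if j = 1 then u1 else if j = 2 then u2 else if j = 3 then u3 else u4) $ i)"

lemma cols4_ax[simp]: "cols4 u1 u2 u3 u4 *v axis 1 1 = u1" "cols4 u1 u2 u3 u4 *v axis 2 1 = u2"
  "cols4 u1 u2 u3 u4 *v axis 3 1 = u3" "cols4 u1 u2 u3 u4 *v axis 4 1 = u4"
  by (simp_all add: matrix_vector_mult_basis column_def cols4_def)

abbreviation W :: "4 \<Rightarrow> 4 \<Rightarrow> real^4^4" where "W i j \<equiv> wedge (axis i 1) (axis j 1)"

lemma in3: "x = r1 *\<^sub>R y1 + r2 *\<^sub>R y2 + r3 *\<^sub>R y3 \<Longrightarrow> x \<in> span {y1, y2, y3}"
  by (simp add: span_add span_base span_scale)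

lemma ax_nth: "axis i (1::real) $ j = (if j = i then 1 else 0)"
  by (simp add: axis_def)

lemmas C = vec_eq_iff forall_4 wedge_def ax_nth

lemma case_neg:
  fixes a b c q r :: real
  assumes a: "a \<noteq> 0" and r: "r \<noteq> 0" and q: "b = -2*a*q" and qr: "c = a*(q^2+r^2)"
  defines "P \<equiv> cols4 (v4 1 q 0 0) (v4 0 r 0 0) (v4 0 0 r 0) (v4 0 0 q 1)"
  shows "span {W 1 2 + W 3 4, W 1 3 + W 4 2, a *\<^sub>R W 1 4 + b *\<^sub>R W 4 2 + c *\<^sub>R W 2 3}
    = span (act2 P ` {W 1 2 + W 3 4, W 1 3 + W 4 2, W 1 4 + W 2 3})"
proof -
  let ?X1 = "wedge (v4 1 q 0 0) (v4 0 r 0 0) + wedge (v4 0 0 r 0) (v4 0 0 q 1)"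
  let ?X2 = "wedge (v4 1 q 0 0) (v4 0 0 r 0) + wedge (v4 0 0 q 1) (v4 0 r 0 0)"
  let ?X3 = "wedge (v4 1 q 0 0) (v4 0 0 q 1) + wedge (v4 0 r 0 0) (v4 0 0 r 0)"
  have img: "act2 P ` {W 1 2 + W 3 4, W 1 3 + W 4 2, W 1 4 + W 2 3} = {?X1, ?X2, ?X3}"
    by (simp add: act2_wedge P_def)
  show ?thesis unfolding img span_eq
  proof (intro conjI; rule subsetI; elim insertE emptyE; simp only:)
    show "W 1 2 + W 3 4 \<in> span {?X1, ?X2, ?X3}"
      by (rule in3[of _ "1/r" _ 0 _ 0]) (use r in \<open>simp add: C\<close>)
    show "W 1 3 + W 4 2 \<in> span {?X1, ?X2, ?X3}"
      by (rule in3[of _ 0 _ "1/r" _ 0]) (use r in \<open>simp add: C\<close>)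
    show "a *\<^sub>R W 1 4 + b *\<^sub>R W 4 2 + c *\<^sub>R W 2 3 \<in> span {?X1, ?X2, ?X3}"
      by (rule in3[of _ 0 _ "b/(2*r)" _ a]) (use r a qr q in \<open>simp add: C field_simps power2_eq_square\<close>)
    show "?X1 \<in> span {W 1 2 + W 3 4, W 1 3 + W 4 2, a *\<^sub>R W 1 4 + b *\<^sub>R W 4 2 + c *\<^sub>R W 2 3}"
      by (rule in3[of _ r _ 0 _ 0]) (simp add: C)
    show "?X2 \<in> span {W 1 2 + W 3 4, W 1 3 + W 4 2, a *\<^sub>R W 1 4 + b *\<^sub>R W 4 2 + c *\<^sub>R W 2 3}"
      by (rule in3[of _ 0 _ r _ 0]) (simp add: C)
    show "?X3 \<in> span {W 1 2 + W 3 4, W 1 3 + W 4 2, a *\<^sub>R W 1 4 + b *\<^sub>R W 4 2 + c *\<^sub>R W 2 3}"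
      by (rule in3[of _ 0 _ "-b/(2*a)" _ "1/a"]) (use r a qr q in \<open>simp add: C field_simps power2_eq_square\<close>)
  qed
qed

lemma case_zero:
  fixes a b c q :: real
  assumes a: "a \<noteq> 0" and q: "b = -2*a*q" and qr: "c = a*q^2"
  defines "P \<equiv> cols4 (v4 1 q 0 0) (v4 0 1 0 0) (v4 0 0 q 1) (v4 0 0 (-1) 0)"
  shows "span {W 1 2 + W 3 4, W 1 3 + W 4 2, a *\<^sub>R W 1 4 + b *\<^sub>R W 4 2 + c *\<^sub>R W 2 3}
    = span (act2 P ` {W 1 2 + W 3 4, W 1 3, W 1 4 + W 2 3})"
proof -
  let ?X1 = "wedge (v4 1 q 0 0) (v4 0 1 0 0) + wedge (v4 0 0 q 1) (v4 0 0 (-1) 0)"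
  let ?X2 = "wedge (v4 1 q 0 0) (v4 0 0 q 1)"
  let ?X3 = "wedge (v4 1 q 0 0) (v4 0 0 (-1) 0) + wedge (v4 0 1 0 0) (v4 0 0 q 1)"
  have img: "act2 P ` {W 1 2 + W 3 4, W 1 3, W 1 4 + W 2 3} = {?X1, ?X2, ?X3}"
    by (simp add: act2_wedge P_def)
  show ?thesis unfolding img span_eq
  proof (intro conjI; rule subsetI; elim insertE emptyE; simp only:)
    show "W 1 2 + W 3 4 \<in> span {?X1, ?X2, ?X3}"
      by (rule in3[of _ 1 _ 0 _ 0]) (simp add: C)
    show "W 1 3 + W 4 2 \<in> span {?X1, ?X2, ?X3}"
      by (rule in3[of _ 0 _ 0 _ "-1"]) (simp add: C)
    show "a *\<^sub>R W 1 4 + b *\<^sub>R W 4 2 + c *\<^sub>R W 2 3 \<in> span {?X1, ?X2, ?X3}"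
      by (rule in3[of _ 0 _ a _ "-b/2"]) (use a in \<open>simp add: C qr q field_simps power2_eq_square\<close>)
    show "?X1 \<in> span {W 1 2 + W 3 4, W 1 3 + W 4 2, a *\<^sub>R W 1 4 + b *\<^sub>R W 4 2 + c *\<^sub>R W 2 3}"
      by (rule in3[of _ 1 _ 0 _ 0]) (simp add: C)
    show "?X2 \<in> span {W 1 2 + W 3 4, W 1 3 + W 4 2, a *\<^sub>R W 1 4 + b *\<^sub>R W 4 2 + c *\<^sub>R W 2 3}"
      by (rule in3[of _ 0 _ "-b/(2*a)" _ "1/a"]) (use a in \<open>simp add: C qr q field_simps power2_eq_square\<close>)
    show "?X3 \<in> span {W 1 2 + W 3 4, W 1 3 + W 4 2, a *\<^sub>R W 1 4 + b *\<^sub>R W 4 2 + c *\<^sub>R W 2 3}"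
      by (rule in3[of _ 0 _ "-1" _ 0]) (simp add: C)
  qed
qed

lemma case_pos:
  fixes a b c q r :: real
  assumes a: "a \<noteq> 0" and r: "r \<noteq> 0" and q: "b = -2*a*q" and qr: "c = a*(q^2-r^2)"
  defines "P \<equiv> cols4 (v4 1 (q+r) 0 0) (v4 (-1) (r-q) 0 0) (v4 0 0 (r-q) (-1)) (v4 0 0 (r+q) 1)"
  shows "span {W 1 2 + W 3 4, W 1 3 + W 4 2, a *\<^sub>R W 1 4 + b *\<^sub>R W 4 2 + c *\<^sub>R W 2 3}
    = span (act2 P ` {W 1 2 + W 3 4, W 1 3, W 2 4})"
proof -
  let ?X1 = "wedge (v4 1 (q+r) 0 0) (v4 (-1) (r-q) 0 0) + wedge (v4 0 0 (r-q) (-1)) (v4 0 0 (r+q) 1)"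
  let ?X2 = "wedge (v4 1 (q+r) 0 0) (v4 0 0 (r-q) (-1))"
  let ?X3 = "wedge (v4 (-1) (r-q) 0 0) (v4 0 0 (r+q) 1)"
  have img: "act2 P ` {W 1 2 + W 3 4, W 1 3, W 2 4} = {?X1, ?X2, ?X3}"
    by (simp add: act2_wedge P_def)
  show ?thesis unfolding img span_eq
  proof (intro conjI; rule subsetI; elim insertE emptyE; simp only:)
    show "W 1 2 + W 3 4 \<in> span {?X1, ?X2, ?X3}"
      by (rule in3[of _ "1/(2*r)" _ 0 _ 0]) (use r in \<open>simp add: C field_simps\<close>)
    show "W 1 3 + W 4 2 \<in> span {?X1, ?X2, ?X3}"
      by (rule in3[of _ 0 _ "1/(2*r)" _ "-1/(2*r)"]) (use r in \<open>simp add: C field_simps\<close>)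
    show "a *\<^sub>R W 1 4 + b *\<^sub>R W 4 2 + c *\<^sub>R W 2 3 \<in> span {?X1, ?X2, ?X3}"
      by (rule in3[of _ 0 _ "b/(4*r) - a/2" _ "-a/2 - b/(4*r)"]) (use a r in \<open>simp add: C qr q field_simps power2_eq_square\<close>)
    show "?X1 \<in> span {W 1 2 + W 3 4, W 1 3 + W 4 2, a *\<^sub>R W 1 4 + b *\<^sub>R W 4 2 + c *\<^sub>R W 2 3}"
      by (rule in3[of _ "2*r" _ 0 _ 0]) (simp add: C algebra_simps)
    show "?X2 \<in> span {W 1 2 + W 3 4, W 1 3 + W 4 2, a *\<^sub>R W 1 4 + b *\<^sub>R W 4 2 + c *\<^sub>R W 2 3}"
      by (rule in3[of _ 0 _ "r + b/(2*a)" _ "-1/a"]) (use a in \<open>simp add: C qr q field_simps power2_eq_square\<close>)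
    show "?X3 \<in> span {W 1 2 + W 3 4, W 1 3 + W 4 2, a *\<^sub>R W 1 4 + b *\<^sub>R W 4 2 + c *\<^sub>R W 2 3}"
      by (rule in3[of _ 0 _ "-r + b/(2*a)" _ "-1/a"]) (use a in \<open>simp add: C qr q field_simps power2_eq_square\<close>)
  qed
qed

lemmas M = vec_eq_iff forall_4 matrix_matrix_mult_def sum_4 mat_def cols4_def v4_def

lemma inv_neg: "r \<noteq> 0 \<Longrightarrow> invertible (cols4 (v4 1 q 0 0) (v4 0 r 0 0) (v4 0 0 r 0) (v4 0 0 q 1))"
  unfolding invertible_right_inverse
  by (rule exI[of _ "cols4 (v4 1 (-q/r) 0 0) (v4 0 (1/r) 0 0) (v4 0 0 (1/r) 0) (v4 0 0 (-q/r) 1)"])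
     (simp add: M field_simps)

lemma inv_zero: "invertible (cols4 (v4 1 q 0 0) (v4 0 1 0 0) (v4 0 0 q 1) (v4 0 0 (-1) 0))"
  unfolding invertible_right_inverse
  by (rule exI[of _ "cols4 (v4 1 (-q) 0 0) (v4 0 1 0 0) (v4 0 0 0 (-1)) (v4 0 0 1 q)"])
     (simp add: M field_simps)

lemma inv_pos: "r \<noteq> 0 \<Longrightarrow> invertible (cols4 (v4 1 (q+r) 0 0) (v4 (-1) (r-q) 0 0) (v4 0 0 (r-q) (-1)) (v4 0 0 (r+q) 1))"
  unfolding invertible_right_inverse
  by (rule exI[of _ "cols4 (v4 ((r-q)/(2*r)) (-(q+r)/(2*r)) 0 0) (v4 (1/(2*r)) (1/(2*r)) 0 0) (v4 0 0 (1/(2*r)) (1/(2*r))) (v4 0 0 (-(r+q)/(2*r)) ((r-q)/(2*r)))"])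
     (simp add: M field_simps)


lemma E_eij:
  assumes "\<forall>k. E *v axis k 1 = e (nk k)"
  shows "act2 E (W i j) = eij e (nk i) (nk j)"
  using assms by (simp add: act2_wedge eij_def)

theorem lemma2p2:
  fixes e :: "nat \<Rightarrow> real^4" and a b c :: real
  assumes "inj_on e {1..4}" and "independent (e ` {1..4})" and "a \<noteq> 0"
  shows "\<exists>\<theta>::real^4^4. invertible \<theta> \<and>
    (b^2 - 4*a*c < 0 \<longrightarrow>
       span {eij e 1 2 + eij e 3 4, eij e 1 3 + eij e 4 2, a *\<^sub>R eij e 1 4 + b *\<^sub>R eij e 4 2 + c *\<^sub>R eij e 2 3}
       = act2 \<theta> ` span {eij e 1 2 + eij e 3 4, eij e 1 3 + eij e 4 2, eij e 1 4 + eij e 2 3}) \<and>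
    (b^2 - 4*a*c = 0 \<longrightarrow>
       span {eij e 1 2 + eij e 3 4, eij e 1 3 + eij e 4 2, a *\<^sub>R eij e 1 4 + b *\<^sub>R eij e 4 2 + c *\<^sub>R eij e 2 3}
       = act2 \<theta> ` span {eij e 1 2 + eij e 3 4, eij e 1 3, eij e 1 4 + eij e 2 3}) \<and>
    (b^2 - 4*a*c > 0 \<longrightarrow>
       span {eij e 1 2 + eij e 3 4, eij e 1 3 + eij e 4 2, a *\<^sub>R eij e 1 4 + b *\<^sub>R eij e 4 2 + c *\<^sub>R eij e 2 3}
       = act2 \<theta> ` span {eij e 1 2 + eij e 3 4, eij e 1 3, eij e 2 4})"
proof -
  obtain E where E: "invertible E" and Ek: "\<forall>k. E *v axis k 1 = e (nk k)"
    using basis_E[OF assms(1,2)] by blast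
  obtain E' where E'1: "E ** E' = mat 1" and E'2: "E' ** E = mat 1"
    using E unfolding invertible_def by blast
  have E': "invertible E'" using E'1 E'2 unfolding invertible_def by blast
  note Es = E_eij[OF Ek]
  have a: "a \<noteq> 0" by fact
  define q where "q = -b/(2*a)"
  have hq: "b = -2*a*q" using a by (simp add: q_def)
  let ?SL = "{W 1 2 + W 3 4, W 1 3 + W 4 2, a *\<^sub>R W 1 4 + b *\<^sub>R W 4 2 + c *\<^sub>R W 2 3}"
  have SL: "act2 E ` ?SL = {eij e 1 2 + eij e 3 4, eij e 1 3 + eij e 4 2, a *\<^sub>R eij e 1 4 + b *\<^sub>R eij e 4 2 + c *\<^sub>R eij e 2 3}"
    by (simp add: Es)
  have R1: "act2 E ` {W 1 2 + W 3 4, W 1 3 + W 4 2, W 1 4 + W 2 3} = {eij e 1 2 + eij e 3 4, eij e 1 3 + eij e 4 2, eij e 1 4 + eij e 2 3}"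
    by (simp add: Es)
  have R2: "act2 E ` {W 1 2 + W 3 4, W 1 3, W 1 4 + W 2 3} = {eij e 1 2 + eij e 3 4, eij e 1 3, eij e 1 4 + eij e 2 3}"
    by (simp add: Es)
  have R3: "act2 E ` {W 1 2 + W 3 4, W 1 3, W 2 4} = {eij e 1 2 + eij e 3 4, eij e 1 3, eij e 2 4}"
    by (simp add: Es)
  have inv: "invertible (E ** P ** E')" if "invertible P" for P
    using E E' that by (simp add: invertible_mult)
  consider (neg) "b^2 - 4*a*c < 0" | (zero) "b^2 - 4*a*c = 0" | (pos) "b^2 - 4*a*c > 0"
    by linarith
  then show ?thesis
  proof cases
    case neg
    define r where "r = sqrt (-(b^2 - 4*a*c)) / (2*a)"
    have r0: "r \<noteq> 0" using neg a by (simp add: r_def)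
    have rr: "r^2 = (4*a*c - b^2) / (4*a^2)"
      using neg by (simp add: r_def power_divide power_mult_distrib)
    have hc: "c = a*(q^2+r^2)" using a unfolding rr q_def by (simp add: field_simps power2_eq_square)
    let ?P = "cols4 (v4 1 q 0 0) (v4 0 r 0 0) (v4 0 0 r 0) (v4 0 0 q 1)"
    have "span (act2 E ` ?SL) = act2 (E ** ?P ** E') ` span (act2 E ` {W 1 2 + W 3 4, W 1 3 + W 4 2, W 1 4 + W 2 3})"
      by (rule reduce[OF E inv_neg[OF r0] case_neg[OF a r0 hq hc] E'2])
    then show ?thesis unfolding SL R1 using neg inv[OF inv_neg[OF r0]] by auto
  next
    case zero
    have hc: "c = a*q^2" using a zero unfolding q_def by (simp add: field_simps power2_eq_square)
    let ?P = "cols4 (v4 1 q 0 0) (v4 0 1 0 0) (v4 0 0 q 1) (v4 0 0 (-1) 0)"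
    have "span (act2 E ` ?SL) = act2 (E ** ?P ** E') ` span (act2 E ` {W 1 2 + W 3 4, W 1 3, W 1 4 + W 2 3})"
      by (rule reduce[OF E inv_zero case_zero[OF a hq hc] E'2])
    then show ?thesis unfolding SL R2 using zero inv[OF inv_zero] by auto
  next
    case pos
    define r where "r = sqrt (b^2 - 4*a*c) / (2*a)"
    have r0: "r \<noteq> 0" using pos a by (simp add: r_def)
    have rr: "r^2 = (b^2 - 4*a*c) / (4*a^2)"
      using pos by (simp add: r_def power_divide power_mult_distrib)
    have hc: "c = a*(q^2-r^2)" using a unfolding rr q_def by (simp add: field_simps power2_eq_square)
    let ?P = "cols4 (v4 1 (q+r) 0 0) (v4 (-1) (r-q) 0 0) (v4 0 0 (r-q) (-1)) (v4 0 0 (r+q) 1)"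
    have "span (act2 E ` ?SL) = act2 (E ** ?P ** E') ` span (act2 E ` {W 1 2 + W 3 4, W 1 3, W 2 4})"
      by (rule reduce[OF E inv_pos[OF r0] case_pos[OF a r0 hq hc] E'2])
    then show ?thesis unfolding SL R3 using pos inv[OF inv_pos[OF r0]] by auto
  qed
qed

end
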